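(* Let $(M,\le)$ be a finite modular lattice and let $Q$ be a set of covering relations of $M$. Then $Q$ is the set of covering relations (of $M$) contained in some saturated transfer system on $M$ if and only if $Q$ is a saturated cover. Moreover, the assignments $Q\mapsto\langle Q\rangle$ and $R\mapsto R_{cov}$ are mutually inverse bijections between saturated covers on $M$ and saturated transfer systems on $M$, where $R_{cov}$ is the set of covering relations of $M$ lying in $R$.
   Context: A lattice $M$ is modular if $a\le b$ implies $a\vee(x\wedge b)=(a\vee x)\wedge b$ for all $a,b,x$. A transfer system on a finite lattice $(P,\le)$ is a partial order $R$ refining $\le$ closed under restriction: $x\,R\,z$ and $y\le z$ imply $(x\wedge y)\,R\,y$. It is saturated if $x\,R\,y$, $y\le z$ and $x\,R\,z$ imply $y\,R\,z$. For a set $Q$ of pairs $(x,y)$ with $x\le y$, $\langle Q\rangle$ is the intersection of all transfer systems containing $Q$. A covering diamond is a quadruple $x,y,x\wedge y,x\vee y$ with $x\ne y$ such that $x\vee y$ covers both $x$ and $y$ and both $x,y$ cover $x\wedge y$. A saturated cover on $M$ is a set $Q$ of covering relations of $M$ such that (1) for all $x,y\in M$, if $x\,Q\,(x\vee y)$ then $(x\wedge y)\,Q\,y$; and (2) for every covering diamond, if three of its four covering relations ($x\wedge y\lessdot x$, $x\wedge y\lessdot y$, $x\lessdot x\vee y$, $y\lessdot x\vee y$) lie in $Q$, then so does the fourth. *)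

theory Defs
  imports Main
begin

definition modular_lattice :: "'a::lattice itself \<Rightarrow> bool" where
  "modular_lattice _ \<longleftrightarrow>
     (\<forall>a b x :: 'a. a \<le> b \<longrightarrow> sup a (inf x b) = inf (sup a x) b)"

definition covers :: "'a::order \<Rightarrow> 'a \<Rightarrow> bool" where
  "covers x y \<longleftrightarrow> x < y \<and> \<not> (\<exists>z. x < z \<and> z < y)"

definition covering_relations :: "('a::order \<times> 'a) set" where
  "covering_relations = {(x, y). covers x y}"

definition transfer_system :: "('a::lattice \<times> 'a) set \<Rightarrow> bool" where
  "transfer_system R \<longleftrightarrow>
     R \<subseteq> {(x, y). x \<le> y} \<and> refl R \<and> antisym R \<and> trans R \<and>
     (\<forall>x y z. (x, z) \<in> R \<and> y \<le> z \<longrightarrow> (inf x y, y) \<in> R)"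

definition saturated :: "('a::lattice \<times> 'a) set \<Rightarrow> bool" where
  "saturated R \<longleftrightarrow>
     (\<forall>x y z. (x, y) \<in> R \<and> y \<le> z \<and> (x, z) \<in> R \<longrightarrow> (y, z) \<in> R)"

definition generated_ts :: "('a::lattice \<times> 'a) set \<Rightarrow> ('a \<times> 'a) set" where
  "generated_ts Q = \<Inter> {R. transfer_system R \<and> Q \<subseteq> R}"

definition covering_diamond :: "'a::lattice \<Rightarrow> 'a \<Rightarrow> bool" where
  "covering_diamond x y \<longleftrightarrow> x \<noteq> y \<and>
     covers x (sup x y) \<and> covers y (sup x y) \<and>
     covers (inf x y) x \<and> covers (inf x y) y"

definition saturated_cover :: "('a::lattice \<times> 'a) set \<Rightarrow> bool" where
  "saturated_cover Q \<longleftrightarrow>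
     Q \<subseteq> covering_relations \<and>
     (\<forall>x y. (x, sup x y) \<in> Q \<longrightarrow> (inf x y, y) \<in> Q) \<and>
     (\<forall>x y. covering_diamond x y \<longrightarrow>
        (let P = {(inf x y, x), (inf x y, y), (x, sup x y), (y, sup x y)}
         in card (P \<inter> Q) \<ge> 3 \<longrightarrow> P \<subseteq> Q))"

definition cov_part :: "('a::lattice \<times> 'a) set \<Rightarrow> ('a \<times> 'a) set" where
  "cov_part R = R \<inter> covering_relations"

end

theory Submission imports Defs begin

lemma modE:
  assumes "modular_lattice TYPE('a::lattice)" "(a::'a) \<le> b"
  shows "sup a (inf x b) = inf (sup a x) b"
  using assms unfolding modular_lattice_def by blast

lemma M1:
  fixes x y :: "'a::lattice"
  assumes m: "modular_lattice TYPE('a)" and c: "covers x (sup x y)"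
  shows "covers (inf x y) y"
proof -
  have ny: "\<not> y \<le> x" using c by (auto simp: covers_def sup_absorb1)
  hence lt: "inf x y < y" by (metis inf.absorb_iff2 inf_le2 order_less_le)
  have "\<not> (inf x y < z \<and> z < y)" for z
  proof
    assume z: "inf x y < z \<and> z < y"
    have "sup x z \<le> sup x y" using z by (simp add: le_supI2 sup.coboundedI2 less_imp_le)
    moreover have "sup x z \<noteq> x" using z
      by (metis inf.absorb2 inf.orderE less_le_not_le inf.strict_coboundedI2 sup.absorb_iff1 dual_order.order_iff_strict inf_le1 le_inf_iff)
    ultimately have e: "sup x z = sup x y" using c unfolding covers_def
      by (metis sup.cobounded1 order_less_le)
    have "sup z (inf x y) = inf (sup z x) y" using modE[OF m less_imp_le[OF conjunct2[OF z]], of x] .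
    moreover have "sup z (inf x y) = z" using z by (simp add: sup_absorb1 less_imp_le)
    moreover have "inf (sup z x) y = y" using e by (metis sup.commute inf.absorb2 sup_ge2)
    ultimately have "z = y" by simp
    thus False using z by simp
  qed
  thus ?thesis using lt unfolding covers_def by blast
qed

lemma M2:
  fixes a b :: "'a::lattice"
  assumes m: "modular_lattice TYPE('a)" and c: "covers (inf a b) b"
  shows "covers a (sup a b)"
proof -
  have nb: "\<not> b \<le> a" using c by (auto simp: covers_def inf_absorb2)
  hence lt: "a < sup a b" by (metis sup.absorb_iff1 sup_ge1 order_less_le)
  have "\<not> (a < z \<and> z < sup a b)" for z
  proof
    assume z: "a < z \<and> z < sup a b"
    have "inf a b \<le> inf z b" using z by (meson inf_mono less_imp_le order_refl)
    moreover have "inf z b \<noteq> b" using z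
      by (metis inf.absorb_iff2 le_sup_iff less_le_not_le)
    ultimately have e: "inf z b = inf a b" using c unfolding covers_def
      by (metis inf.cobounded2 order_less_le)
    have "sup a (inf b z) = inf (sup a b) z" using modE[OF m less_imp_le[OF conjunct1[OF z]], of b] .
    moreover have "sup a (inf b z) = a" using e by (simp add: inf.commute)
    moreover have "inf (sup a b) z = z" using z by (simp add: inf_absorb2 less_imp_le)
    ultimately have "a = z" by simp
    thus False using z by simp
  qed
  thus ?thesis using lt unfolding covers_def by blast
qed

lemma cover_above:
  fixes x y :: "'a::{finite,order}"
  assumes "x < y" shows "\<exists>c. covers x c \<and> c \<le> y"
proof -
  obtain m where m: "m \<in> {z. x < z \<and> z \<le> y}" "\<forall>b\<in>{z. x < z \<and> z \<le> y}. b \<le> m \<longrightarrow> m = b"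
    using finite_has_minimal[of "{z. x < z \<and> z \<le> y}"] assms by auto
  thus ?thesis unfolding covers_def
    by (metis (mono_tags, lifting) mem_Collect_eq order_less_imp_le order_less_le_trans order_less_le)
qed

lemma cover_below:
  fixes x u :: "'a::{finite,order}"
  assumes "x < u" shows "\<exists>t. x \<le> t \<and> covers t u"
proof -
  obtain m where m: "m \<in> {z. x \<le> z \<and> z < u}" "\<forall>b\<in>{z. x \<le> z \<and> z < u}. m \<le> b \<longrightarrow> m = b"
    using finite_has_maximal[of "{z. x \<le> z \<and> z < u}"] assms by auto
  thus ?thesis unfolding covers_def
    by (metis (mono_tags, lifting) mem_Collect_eq order_less_imp_le order_le_less_trans order_less_le)
qed

lemma chain_lemma:
  fixes x z :: "'a::{finite,order}"
  shows "x \<le> z \<Longrightarrow> (\<forall>u v. x \<le> u \<and> covers u v \<and> v \<le> z \<longrightarrow> (u,v) \<in> S) \<Longrightarrow> (x,z) \<in> S\<^sup>*"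
proof (induction "card {w. x < w}" arbitrary: x rule: less_induct)
  case less
  show ?case
  proof (cases "x = z")
    case True then show ?thesis by simp
  next
    case False
    then have "x < z" using less.prems by simp
    then obtain c where c: "covers x c" "c \<le> z" using cover_above by blast
    have xc: "x < c" using c by (simp add: covers_def)
    have "{w. c < w} \<subset> {w. x < w}" using xc by auto
    hence "card {w. c < w} < card {w. x < w}" by (simp add: psubset_card_mono)
    moreover have "\<forall>u v. c \<le> u \<and> covers u v \<and> v \<le> z \<longrightarrow> (u,v) \<in> S"
      using less.prems(2) xc by (meson order_less_le_trans less_imp_le)
    ultimately have "(c,z) \<in> S\<^sup>*" using less.hyps[of c] c by auto
    moreover have "(x,c) \<in> S" using less.prems c by auto
    ultimately show ?thesis by (meson converse_rtrancl_into_rtrancl)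
  qed
qed


lemma le_TS: "transfer_system {(x::'a::lattice,y). x \<le> y}"
  unfolding transfer_system_def refl_on_def antisym_def trans_def by auto

lemma gen_least: "transfer_system R \<Longrightarrow> S \<subseteq> R \<Longrightarrow> generated_ts S \<subseteq> R"
  unfolding generated_ts_def by blast

lemma TS_rtrancl: assumes "transfer_system R" "S \<subseteq> R" shows "S\<^sup>* \<subseteq> R"
proof
  fix p assume "p \<in> S\<^sup>*"
  then obtain a b where p: "p = (a,b)" "(a,b) \<in> S\<^sup>*" by (cases p) auto
  from p(2) have "(a,b) \<in> R"
  proof (induction rule: rtrancl_induct)
    case base then show ?case using assms(1) unfolding transfer_system_def refl_on_def by auto
  next
    case (step y z) then show ?case using assms unfolding transfer_system_def trans_def by blast
  qed
  thus "p \<in> R" using p by simp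
qed

lemma gen_rtrancl: "S\<^sup>* \<subseteq> generated_ts S"
  unfolding generated_ts_def using TS_rtrancl by blast

lemma TS_le: "transfer_system R \<Longrightarrow> (x,y) \<in> R \<Longrightarrow> x \<le> y"
  unfolding transfer_system_def by blast

lemma TS_restr: "transfer_system R \<Longrightarrow> (x,z) \<in> R \<Longrightarrow> y \<le> z \<Longrightarrow> (inf x y, y) \<in> R"
  unfolding transfer_system_def by blast

lemma TS_trans: "transfer_system R \<Longrightarrow> (x,y) \<in> R \<Longrightarrow> (y,z) \<in> R \<Longrightarrow> (x,z) \<in> R"
  unfolding transfer_system_def trans_def by blast

lemma R_in_cov_rtrancl:
  fixes R :: "('a::{finite,lattice} \<times> 'a) set"
  assumes ts: "transfer_system R" and sat: "saturated R" and xy: "(x,y) \<in> R"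
  shows "(x,y) \<in> (cov_part R)\<^sup>*"
proof (rule chain_lemma)
  show "x \<le> y" using TS_le[OF ts xy] .
  show "\<forall>u v. x \<le> u \<and> covers u v \<and> v \<le> y \<longrightarrow> (u, v) \<in> cov_part R"
  proof (intro allI impI)
    fix u v assume h: "x \<le> u \<and> covers u v \<and> v \<le> y"
    have uv: "u \<le> v" using h by (simp add: covers_def less_imp_le)
    have "(inf x v, v) \<in> R" using TS_restr[OF ts xy] h by blast
    moreover have "inf x v = x" using h uv by (meson inf_absorb1 order_trans)
    ultimately have xv: "(x,v) \<in> R" by simp
    have "(inf x u, u) \<in> R" using TS_restr[OF ts xy] h uv by auto
    hence xu: "(x,u) \<in> R" using h by (simp add: inf_absorb1)
    have "(u,v) \<in> R" using sat xu xv uv unfolding saturated_def by blast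
    thus "(u,v) \<in> cov_part R" using h unfolding cov_part_def covering_relations_def by auto
  qed
qed

lemma part_C:
  fixes R :: "('a::{finite,lattice} \<times> 'a) set"
  assumes ts: "transfer_system R" and sat: "saturated R"
  shows "generated_ts (cov_part R) = R"
proof
  show "generated_ts (cov_part R) \<subseteq> R" using gen_least[OF ts] unfolding cov_part_def by blast
  show "R \<subseteq> generated_ts (cov_part R)"
    using R_in_cov_rtrancl[OF ts sat] gen_rtrancl by fast
qed

lemma card_le2: "X \<subseteq> {c,d} \<Longrightarrow> card X \<le> 2"
proof -
  assume "X \<subseteq> {c,d}"
  hence "card X \<le> card {c,d}" by (rule card_mono[rotated]) simp
  also have "\<dots> \<le> 2" by (simp add: card_insert_if)
  finally show ?thesis .
qed

lemma part_A:
  fixes R :: "('a::{finite,lattice} \<times> 'a) set"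
  assumes m: "modular_lattice TYPE('a)" and ts: "transfer_system R" and sat: "saturated R"
  shows "saturated_cover (cov_part R)"
  unfolding saturated_cover_def
proof (intro conjI allI impI)
  show "cov_part R \<subseteq> covering_relations" unfolding cov_part_def by blast
next
  fix x y :: 'a assume h: "(x, sup x y) \<in> cov_part R"
  hence c: "covers x (sup x y)" and r: "(x, sup x y) \<in> R"
    unfolding cov_part_def covering_relations_def by auto
  have "(inf x y, y) \<in> R" using TS_restr[OF ts r] by simp
  moreover have "covers (inf x y) y" using M1[OF m c] .
  ultimately show "(inf x y, y) \<in> cov_part R" unfolding cov_part_def covering_relations_def by auto
next
  fix x y :: 'a assume d: "covering_diamond x y"
  define a where "a = inf x y"
  define b where "b = sup x y"
  have cv: "covers a x" "covers a y" "covers x b" "covers y b"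
    using d unfolding covering_diamond_def a_def b_def by auto
  have ax: "a \<le> x" "a \<le> y" "x \<le> b" "y \<le> b" using cv by (auto simp: covers_def)
  have D1: "(a,x) \<in> R" if "(a,y) \<in> R" "(y,b) \<in> R"
  proof -
    have "(a,b) \<in> R" using TS_trans[OF ts that] .
    from TS_restr[OF ts this ax(3)] show ?thesis using ax(1) by (simp add: inf_absorb1)
  qed
  have D2: "(a,y) \<in> R" if "(a,x) \<in> R" "(x,b) \<in> R"
  proof -
    have "(a,b) \<in> R" using TS_trans[OF ts that] .
    from TS_restr[OF ts this ax(4)] show ?thesis using ax(2) by (simp add: inf_absorb1)
  qed
  have D3: "(x,b) \<in> R" if "(a,x) \<in> R" "(a,y) \<in> R" "(y,b) \<in> R"
  proof -
    have "(a,b) \<in> R" using TS_trans[OF ts that(2,3)] .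
    thus ?thesis using sat that(1) ax(3) unfolding saturated_def by blast
  qed
  have D4: "(y,b) \<in> R" if "(a,y) \<in> R" "(a,x) \<in> R" "(x,b) \<in> R"
  proof -
    have "(a,b) \<in> R" using TS_trans[OF ts that(2,3)] .
    thus ?thesis using sat that(1) ax(4) unfolding saturated_def by blast
  qed
  define P where "P = {(a, x), (a, y), (x, b), (y, b)}"
  have memR: "p \<in> cov_part R \<longleftrightarrow> p \<in> R" if "p \<in> P" for p
    using that cv unfolding P_def cov_part_def covering_relations_def by auto
  show "let P = {(inf x y, x), (inf x y, y), (x, sup x y), (y, sup x y)}
         in 3 \<le> card (P \<inter> cov_part R) \<longrightarrow> P \<subseteq> cov_part R"
    unfolding Let_def a_def[symmetric] b_def[symmetric] P_def[symmetric]
  proof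
    assume c3: "3 \<le> card (P \<inter> cov_part R)"
    have hh: "\<And>c d. P \<inter> cov_part R \<subseteq> {c,d} \<Longrightarrow> False" using card_le2 c3 by fastforce
    have "(a,x) \<in> cov_part R \<or> (a,y) \<in> cov_part R" using hh[of "(x,b)" "(y,b)"] unfolding P_def by blast
    moreover have "(a,x) \<in> cov_part R \<or> (x,b) \<in> cov_part R" using hh[of "(a,y)" "(y,b)"] unfolding P_def by blast
    moreover have "(a,x) \<in> cov_part R \<or> (y,b) \<in> cov_part R" using hh[of "(a,y)" "(x,b)"] unfolding P_def by blast
    moreover have "(a,y) \<in> cov_part R \<or> (x,b) \<in> cov_part R" using hh[of "(a,x)" "(y,b)"] unfolding P_def by blast
    moreover have "(a,y) \<in> cov_part R \<or> (y,b) \<in> cov_part R" using hh[of "(a,x)" "(x,b)"] unfolding P_def by blast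
    moreover have "(x,b) \<in> cov_part R \<or> (y,b) \<in> cov_part R" using hh[of "(a,x)" "(a,y)"] unfolding P_def by blast
    ultimately have "(a,x) \<in> R \<and> (a,y) \<in> R \<and> (x,b) \<in> R \<and> (y,b) \<in> R"
      using memR D1 D2 D3 D4 unfolding P_def by blast
    thus "P \<subseteq> cov_part R" using memR unfolding P_def by blast
  qed
qed


lemma rt_le:
  fixes Q :: "('a::order \<times> 'a) set"
  assumes "Q \<subseteq> covering_relations" "(x,y) \<in> Q\<^sup>*" shows "x \<le> y"
  using assms(2)
proof (induction rule: rtrancl_induct)
  case base then show ?case by simp
next
  case (step y z) then show ?case using assms(1) unfolding covering_relations_def covers_def
    by (auto dest: order_trans[OF _ less_imp_le])
qed

lemma single_restr:
  fixes Q :: "('a::lattice \<times> 'a) set"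
  assumes qc: "Q \<subseteq> covering_relations"
    and c1: "\<forall>x y. (x, sup x y) \<in> Q \<longrightarrow> (inf x y, y) \<in> Q"
    and xw: "(x,w) \<in> Q" and yw: "y \<le> w"
  shows "(inf x y, y) \<in> Q\<^sup>*"
proof (cases "y \<le> x")
  case True then show ?thesis by (simp add: inf_absorb2)
next
  case False
  have c: "covers x w" using xw qc unfolding covering_relations_def by auto
  have "x < sup x y" using False by (metis sup.absorb_iff1 sup_ge1 order_less_le)
  moreover have "sup x y \<le> w" using c yw by (simp add: covers_def less_imp_le)
  ultimately have "sup x y = w" using c unfolding covers_def by (metis order_less_le)
  hence "(x, sup x y) \<in> Q" using xw by simp
  hence "(inf x y, y) \<in> Q" using c1 by blast
  thus ?thesis by simp
qed

lemma rt_restr: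
  fixes Q :: "('a::lattice \<times> 'a) set"
  assumes qc: "Q \<subseteq> covering_relations"
    and c1: "\<forall>x y. (x, sup x y) \<in> Q \<longrightarrow> (inf x y, y) \<in> Q"
    and xz: "(x,z) \<in> Q\<^sup>*"
  shows "\<forall>y. y \<le> z \<longrightarrow> (inf x y, y) \<in> Q\<^sup>*"
  using xz
proof (induction rule: converse_rtrancl_induct)
  case base then show ?case by (simp add: inf_absorb2)
next
  case (step x w)
  show ?case
  proof (intro allI impI)
    fix y assume yz: "y \<le> z"
    have "(inf w y, y) \<in> Q\<^sup>*" using step.IH yz by blast
    moreover have "(inf x (inf w y), inf w y) \<in> Q\<^sup>*"
      using single_restr[OF qc c1 step.hyps(1)] by simp
    moreover have "x \<le> w" using step.hyps(1) qc unfolding covering_relations_def covers_def by auto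
    hence "inf x (inf w y) = inf x y" by (metis inf.absorb1 inf.assoc)
    ultimately show "(inf x y, y) \<in> Q\<^sup>*" by simp
  qed
qed

lemma rt_TS:
  fixes Q :: "('a::lattice \<times> 'a) set"
  assumes qc: "Q \<subseteq> covering_relations"
    and c1: "\<forall>x y. (x, sup x y) \<in> Q \<longrightarrow> (inf x y, y) \<in> Q"
  shows "transfer_system (Q\<^sup>*)"
  unfolding transfer_system_def
proof (intro conjI)
  show "Q\<^sup>* \<subseteq> {(x, y). x \<le> y}" using rt_le[OF qc] by auto
  show "refl (Q\<^sup>*)" by (rule refl_rtrancl)
  show "antisym (Q\<^sup>*)" unfolding antisym_def using rt_le[OF qc] by (blast intro: order_antisym)
  show "trans (Q\<^sup>*)" by (rule trans_rtrancl)
  show "\<forall>x y z. (x, z) \<in> Q\<^sup>* \<and> y \<le> z \<longrightarrow> (inf x y, y) \<in> Q\<^sup>*"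
    using rt_restr[OF qc c1] by blast
qed

lemma gen_eq:
  fixes Q :: "('a::lattice \<times> 'a) set"
  assumes qc: "Q \<subseteq> covering_relations"
    and c1: "\<forall>x y. (x, sup x y) \<in> Q \<longrightarrow> (inf x y, y) \<in> Q"
  shows "generated_ts Q = Q\<^sup>*"
  using gen_least[OF rt_TS[OF qc c1]] gen_rtrancl[of Q] by blast

lemma cov_rt:
  fixes Q :: "('a::lattice \<times> 'a) set"
  assumes qc: "Q \<subseteq> covering_relations"
  shows "cov_part (Q\<^sup>*) = Q"
proof
  show "Q \<subseteq> cov_part (Q\<^sup>*)" using qc unfolding cov_part_def by auto
  show "cov_part (Q\<^sup>*) \<subseteq> Q"
  proof
    fix p assume "p \<in> cov_part (Q\<^sup>*)"
    then obtain x y where p: "p = (x,y)" "(x,y) \<in> Q\<^sup>*" "covers x y"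
      unfolding cov_part_def covering_relations_def by auto
    have "x \<noteq> y" using p(3) by (auto simp: covers_def)
    then obtain w where w: "(x,w) \<in> Q" "(w,y) \<in> Q\<^sup>*" using p(2) by (metis converse_rtranclE)
    have "x < w" using w(1) qc unfolding covering_relations_def covers_def by auto
    moreover have "w \<le> y" using rt_le[OF qc w(2)] .
    ultimately have "w = y" using p(3) unfolding covers_def by (metis order_less_le)
    thus "p \<in> Q" using w p by simp
  qed
qed


lemma K:
  fixes x w a :: "'a::lattice"
  assumes "covers x w" "x \<le> a" "\<not> w \<le> a"
  shows "inf a w = x"
proof -
  have "x \<le> inf a w" using assms by (simp add: covers_def less_imp_le)
  moreover have "inf a w \<noteq> w" using assms(3) by (metis inf.absorb_iff2)
  moreover have "inf a w \<le> w" by simp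
  ultimately show ?thesis using assms(1) unfolding covers_def by (metis order_less_le)
qed

definition good :: "('a::order \<times> 'a) set \<Rightarrow> 'a \<Rightarrow> 'a \<Rightarrow> bool" where
  "good Q x z \<longleftrightarrow> (\<forall>u v. x \<le> u \<and> covers u v \<and> v \<le> z \<longrightarrow> (u,v) \<in> Q)"

lemma cover_eq_top: "covers a b \<Longrightarrow> a < c \<Longrightarrow> c \<le> b \<Longrightarrow> c = (b::'a::order)"
  unfolding covers_def using order_le_less by blast

lemma cover_eq_bot: "covers a b \<Longrightarrow> a \<le> c \<Longrightarrow> c < b \<Longrightarrow> c = (a::'a::order)"
  unfolding covers_def using order_le_less by blast

lemma case2:
  fixes Q :: "('a::lattice \<times> 'a) set"
  assumes m: "modular_lattice TYPE('a)"
    and c1: "\<forall>x y. (x, sup x y) \<in> Q \<longrightarrow> (inf x y, y) \<in> Q"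
    and cxw: "covers x w" and g: "good Q w z" and wz: "w \<le> z"
    and xu: "x \<le> u" and uv: "covers u v" and vz: "v \<le> z" and nwv: "\<not> w \<le> v"
  shows "(u,v) \<in> Q"
proof -
  define p where "p = sup u w"
  have ulev: "u \<le> v" using uv by (simp add: covers_def less_imp_le)
  have "inf v w = x" using K[OF cxw order_trans[OF xu ulev] nwv] .
  have "sup u (inf w v) = inf (sup u w) v" using modE[OF m ulev] .
  hence ip: "inf p v = u" using \<open>inf v w = x\<close> xu unfolding p_def by (simp add: inf.commute sup_absorb1)
  have "covers p (sup p v)" using M2[OF m] uv ip by simp
  moreover have "w \<le> p" unfolding p_def by simp
  moreover have "sup p v \<le> z" unfolding p_def using ulev vz wz
    by (meson le_sup_iff order_trans)
  ultimately have "(p, sup p v) \<in> Q" using g unfolding good_def by blast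
  hence "(inf p v, v) \<in> Q" using c1 by blast
  thus ?thesis using ip by simp
qed

lemma case1:
  fixes Q :: "('a::{finite,lattice} \<times> 'a) set"
  assumes m: "modular_lattice TYPE('a)"
    and sc: "saturated_cover Q"
    and xwQ: "(x,w) \<in> Q" and g: "good Q w z" and wz: "w \<le> z"
  shows "x \<le> u \<Longrightarrow> \<not> w \<le> u \<Longrightarrow> covers u v \<Longrightarrow> w \<le> v \<Longrightarrow> v \<le> z \<Longrightarrow> (u,v) \<in> Q"
proof (induction "card {t. t < u}" arbitrary: u v rule: less_induct)
  case less
  note scd = sc[unfolded saturated_cover_def]
  note qc = conjunct1[OF scd] and c1 = conjunct1[OF conjunct2[OF scd]] and c2 = conjunct2[OF conjunct2[OF scd]]
  have cxw: "covers x w" using xwQ qc unfolding covering_relations_def by auto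
  have xw: "x < w" using cxw by (simp add: covers_def)
  have ulev: "u < v" using less.prems(3) by (simp add: covers_def)
  have vsup: "sup u w = v"
  proof -
    have "u \<noteq> sup u w" using less.prems(2) by (metis sup_ge2)
    hence "u < sup u w" by (simp add: less_le)
    moreover have "sup u w \<le> v" using less.prems(4) ulev by simp
    ultimately show ?thesis using cover_eq_top[OF less.prems(3)] by blast
  qed
  show ?case
  proof (cases "u = x")
    case True
    have "w = v" using cover_eq_top[OF less.prems(3), of w] xw less.prems(4) True by blast
    thus ?thesis using True xwQ by simp
  next
    case False
    hence "x < u" using less.prems(1) by simp
    then obtain t where t: "x \<le> t" "covers t u" using cover_below by blast
    have tu: "t < u" using t(2) by (simp add: covers_def)
    define s where "s = sup t w"
    have nwt: "\<not> w \<le> t" using less.prems(2) tu by (meson order_trans less_imp_le)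
    have itw: "inf t w = x" using K[OF cxw t(1) nwt] .
    have cts: "covers t s" unfolding s_def using M2[OF m, of t w] itw cxw by simp
    have sv: "s \<le> v" unfolding s_def using tu ulev less.prems(4) by simp
    have crd: "card {a. a < t} < card {a. a < u}"
      using tu by (intro psubset_card_mono) (auto dest: order_less_trans)
    have wS: "w \<le> s" unfolding s_def by simp
    have sZ: "s \<le> z" using order_trans[OF sv less.prems(5)] .
    have tsQ: "(t,s) \<in> Q" using less.hyps[OF crd t(1) nwt cts wS sZ] .
    have uz: "u \<le> z" using ulev less.prems(5) by simp
    have tuQ: "(t,u) \<in> Q" using case2[OF m c1 cxw g wz t(1) t(2) uz less.prems(2)] .
    have "sup u (sup t w) = sup (sup u t) w" by (simp add: sup.assoc)
    moreover have "sup u t = u" using tu by (simp add: sup_absorb1 less_imp_le)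
    ultimately have sus: "sup u s = v" unfolding s_def using vsup by simp
    have ius: "inf u s = t"
    proof -
      have "t \<le> inf u s" using tu unfolding s_def by (simp add: less_imp_le)
      moreover have "inf u s \<le> u" by simp
      moreover have "inf u s \<noteq> u"
      proof
        assume "inf u s = u"
        hence "u \<le> s" by (metis inf.absorb_iff1)
        hence "s = v" using sus by (simp add: sup_absorb2)
        thus False using cts tu ulev unfolding covers_def by blast
      qed
      ultimately show ?thesis using cover_eq_bot[OF t(2), of "inf u s"] by (simp add: less_le)
    qed
    have csv: "covers s v" using M2[OF m, of s u] t(2) ius sus by (simp add: inf.commute sup.commute)
    have usne: "u \<noteq> s" using less.prems(2) wS by blast
    have svQ: "(s,v) \<in> Q" using g csv less.prems(5) wS unfolding good_def by blast
    have dia: "covering_diamond u s" unfolding covering_diamond_def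
      using usne ius sus less.prems(3) csv t(2) cts by simp
    have tsne: "t \<noteq> s" using cts by (auto simp: covers_def)
    let ?P = "{(inf u s, u), (inf u s, s), (u, sup u s), (s, sup u s)}"
    have sub: "{(t,u),(t,s),(s,v)} \<subseteq> ?P \<inter> Q" using tsQ tuQ svQ ius sus by auto
    have c3: "card {(t,u),(t,s),(s,v)} = 3" using usne tsne by auto
    have fin: "finite (?P \<inter> Q)" by simp
    have "3 \<le> card (?P \<inter> Q)" using card_mono[OF fin sub] c3 by simp
    hence "?P \<subseteq> Q" using c2 dia unfolding Let_def by blast
    thus ?thesis using sus by simp
  qed
qed


lemma step_good:
  fixes Q :: "('a::{finite,lattice} \<times> 'a) set"
  assumes m: "modular_lattice TYPE('a)" and sc: "saturated_cover Q"
    and xwQ: "(x,w) \<in> Q" and g: "good Q w z" and wz: "w \<le> z"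
  shows "good Q x z"
  unfolding good_def
proof (intro allI impI)
  note scd = sc[unfolded saturated_cover_def]
  note qc = conjunct1[OF scd] and c1 = conjunct1[OF conjunct2[OF scd]]
  have cxw: "covers x w" using xwQ qc unfolding covering_relations_def by auto
  fix u v assume h: "x \<le> u \<and> covers u v \<and> v \<le> z"
  show "(u,v) \<in> Q"
  proof (cases "w \<le> u")
    case True then show ?thesis using g h unfolding good_def by blast
  next
    case nwu: False
    show ?thesis
    proof (cases "w \<le> v")
      case True then show ?thesis using case1[OF m sc xwQ g wz] h nwu by blast
    next
      case False then show ?thesis using case2[OF m c1 cxw g wz] h by blast
    qed
  qed
qed

lemma rt_good:
  fixes Q :: "('a::{finite,lattice} \<times> 'a) set"
  assumes m: "modular_lattice TYPE('a)" and sc: "saturated_cover Q"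
    and xz: "(x,z) \<in> Q\<^sup>*"
  shows "good Q x z"
  using xz
proof (induction rule: converse_rtrancl_induct)
  case base
  show ?case unfolding good_def covers_def by (auto dest: order.strict_trans2 order.strict_trans1)
next
  case (step x w)
  have qc: "Q \<subseteq> covering_relations" using sc unfolding saturated_cover_def by blast
  show ?case using step_good[OF m sc step.hyps(1) step.IH rt_le[OF qc step.hyps(2)]] .
qed

lemma part_B:
  fixes Q :: "('a::{finite,lattice} \<times> 'a) set"
  assumes m: "modular_lattice TYPE('a)" and sc: "saturated_cover Q"
  shows "transfer_system (generated_ts Q) \<and> saturated (generated_ts Q) \<and> cov_part (generated_ts Q) = Q"
proof -
  note scd = sc[unfolded saturated_cover_def]
  note qc = conjunct1[OF scd] and c1 = conjunct1[OF conjunct2[OF scd]]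
  have ge: "generated_ts Q = Q\<^sup>*" using gen_eq[OF qc c1] .
  have "saturated (Q\<^sup>*)" unfolding saturated_def
  proof (intro allI impI)
    fix x y z assume h: "(x, y) \<in> Q\<^sup>* \<and> y \<le> z \<and> (x, z) \<in> Q\<^sup>*"
    have "good Q x z" using rt_good[OF m sc] h by blast
    moreover have "x \<le> y" using rt_le[OF qc] h by blast
    ultimately have "\<forall>u v. y \<le> u \<and> covers u v \<and> v \<le> z \<longrightarrow> (u,v) \<in> Q"
      unfolding good_def by (meson order_trans)
    thus "(y,z) \<in> Q\<^sup>*" using chain_lemma h by blast
  qed
  thus ?thesis using ge rt_TS[OF qc c1] cov_rt[OF qc] by simp
qed

theorem theorem3p13:
  fixes Q :: "('a::{finite, lattice} \<times> 'a) set"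
  assumes "modular_lattice TYPE('a)"
    and "Q \<subseteq> covering_relations"
  shows "((\<exists>R. transfer_system R \<and> saturated R \<and> Q = cov_part R) \<longleftrightarrow> saturated_cover Q)
    \<and> bij_betw generated_ts {Q :: ('a \<times> 'a) set. saturated_cover Q}
                           {R. transfer_system R \<and> saturated R}
    \<and> bij_betw cov_part {R :: ('a \<times> 'a) set. transfer_system R \<and> saturated R}
                        {Q. saturated_cover Q}
    \<and> (\<forall>Q' :: ('a \<times> 'a) set. saturated_cover Q' \<longrightarrow> cov_part (generated_ts Q') = Q')
    \<and> (\<forall>R :: ('a \<times> 'a) set. transfer_system R \<and> saturated R \<longrightarrow> generated_ts (cov_part R) = R)"
proof (intro conjI)
  note m = assms(1)
  show "(\<exists>R. transfer_system R \<and> saturated R \<and> Q = cov_part R) \<longleftrightarrow> saturated_cover Q"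
  proof
    assume "\<exists>R. transfer_system R \<and> saturated R \<and> Q = cov_part R"
    thus "saturated_cover Q" using part_A[OF m] by blast
  next
    assume "saturated_cover Q"
    thus "\<exists>R. transfer_system R \<and> saturated R \<and> Q = cov_part R"
      using part_B[OF m] by metis
  qed
  show "bij_betw generated_ts {Q :: ('a \<times> 'a) set. saturated_cover Q}
                           {R. transfer_system R \<and> saturated R}"
    by (rule bij_betw_byWitness[where f' = cov_part]) (use part_A[OF m] part_B[OF m] part_C in blast)+
  show "bij_betw cov_part {R :: ('a \<times> 'a) set. transfer_system R \<and> saturated R}
                        {Q. saturated_cover Q}"
    by (rule bij_betw_byWitness[where f' = generated_ts]) (use part_A[OF m] part_B[OF m] part_C in blast)+
  show "\<forall>Q' :: ('a \<times> 'a) set. saturated_cover Q' \<longrightarrow> cov_part (generated_ts Q') = Q'"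
    using part_B[OF m] by blast
  show "\<forall>R :: ('a \<times> 'a) set. transfer_system R \<and> saturated R \<longrightarrow> generated_ts (cov_part R) = R"
    using part_C by blast
qed

end
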